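(* Let $\mathcal B=(\mathcal T,A,p,c)$ be a BMDP. For every list $\alpha\in\mathcal T^*$ of types, $\mathrm{ETotal}_*(\alpha)=\sum_{i=1}^{|\alpha|}\mathrm{ETotal}_*(\alpha_i)$ (in $[0,\infty]$). Moreover, for every $q\in\mathcal T$, $\mathrm{ETotal}_*(q)=\min_{a\in A(q)}\Big(c(q,a)+\sum_{\alpha\in\mathcal T^*}p(q,a)(\alpha)\sum_{i=1}^{|\alpha|}\mathrm{ETotal}_*(\alpha_i)\Big)$.
   Context: A branching Markov decision process (BMDP) is a tuple $\mathcal B=(\mathcal T,A,p,c)$ where $\mathcal T$ is a finite set of types, $A$ is a finite set of actions, $p:\mathcal T\times A\to \mathrm{Dist}(\mathcal T^* )$ is a partial function assigning to some pairs $(q,a)$ a probability distribution with finite support over the set $\mathcal T^*$ of finite lists of types, and $c:\mathcal T\times A\to\mathbb R_{>0}$ is a cost function with strictly positive values. $A(q)$ denotes the (nonempty) set of actions $a$ for which $p(q,a)$ is defined. For a list $\alpha$, $|\alpha|$ is its length and $\alpha_i$ its $i$-th element; $\varepsilon$ is the empty list. Semantics: the BMDP induces an MDP whose states are lists $\alpha\in\mathcal T^*$. In state $\alpha$ the enabled actions are pairs $(i,a)$ with $1\le i\le|\alpha|$ and $a\in A(\alpha_i)$; taking $(i,a)$ incurs cost $c(\alpha_i,a)$ and moves to $\alpha_1\cdots\alpha_{i-1}\cdot\beta\cdot\alpha_{i+1}\cdots\alpha_{|\alpha|}$ with probability $p(\alpha_i,a)(\beta)$. The state $\varepsilon$ has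 no actions and is absorbing with no further cost. A strategy maps each finite history to a probability distribution over actions enabled in its last state; a strategy $\sigma$ and initial state $\alpha$ induce a probability measure on runs. $\mathrm{ETotal}_N(\alpha,\sigma)$ is the expected sum of costs in the first $N$ steps, $\mathrm{ETotal}_*(\alpha,\sigma)=\lim_{N\to\infty}\mathrm{ETotal}_N(\alpha,\sigma)\in[0,\infty]$, and $\mathrm{ETotal}_*(\alpha)=\inf_\sigma\mathrm{ETotal}_*(\alpha,\sigma)$ over all strategies. Conventions $0\cdot\infty=0$, $r+\infty=\infty$. *)

theory Defs
  imports "HOL-Probability.Probability_Mass_Function"
begin

text \<open>A q is the (nonempty) set of actions enabled at q (where p is defined),
  p q a the successor distribution over lists of types (finite support),
  c q a the cost (strictly positive).\<close>

definition bmdp :: "('q::finite \<Rightarrow> 'a::finite set) \<Rightarrow> ('q \<Rightarrow> 'a \<Rightarrow> 'q list pmf) \<Rightarrow> ('q \<Rightarrow> 'a \<Rightarrow> real) \<Rightarrow> bool" where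
  "bmdp A p c \<longleftrightarrow> (\<forall>q. A q \<noteq> {} \<and> (\<forall>a\<in>A q. finite (set_pmf (p q a)) \<and> c q a > 0))"

text \<open>Histories: initial state and list of (action, successor state) steps.
  An action of the induced MDP is a pair (i, a) with 0-based position i.\<close>
type_synonym ('q,'a) hist = "'q list \<times> ((nat \<times> 'a) \<times> 'q list) list"
type_synonym ('q,'a) strat = "('q,'a) hist \<Rightarrow> (nat \<times> 'a) pmf"

definition last_st :: "('q,'a) hist \<Rightarrow> 'q list" where
  "last_st h = (if snd h = [] then fst h else snd (last (snd h)))"

definition replace_at :: "'q list \<Rightarrow> nat \<Rightarrow> 'q list \<Rightarrow> 'q list" where
  "replace_at \<alpha> i \<beta> = take i \<alpha> @ \<beta> @ drop (Suc i) \<alpha>"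

definition enabled :: "('q \<Rightarrow> 'a set) \<Rightarrow> 'q list \<Rightarrow> (nat \<times> 'a) set" where
  "enabled A \<alpha> = {(i, a). i < length \<alpha> \<and> a \<in> A (\<alpha> ! i)}"

definition strategy :: "('q \<Rightarrow> 'a set) \<Rightarrow> ('q,'a) strat \<Rightarrow> bool" where
  "strategy A \<sigma> \<longleftrightarrow> (\<forall>h. last_st h \<noteq> [] \<longrightarrow> set_pmf (\<sigma> h) \<subseteq> enabled A (last_st h))"

primrec etotN :: "('q \<Rightarrow> 'a \<Rightarrow> 'q list pmf) \<Rightarrow> ('q \<Rightarrow> 'a \<Rightarrow> real) \<Rightarrow> ('q,'a) strat
    \<Rightarrow> nat \<Rightarrow> ('q,'a) hist \<Rightarrow> ennreal" where
  "etotN p c \<sigma> 0 h = 0"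
| "etotN p c \<sigma> (Suc n) h =
     (if last_st h = [] then 0 else
      \<integral>\<^sup>+ ia. (ennreal (c (last_st h ! fst ia) (snd ia)) +
          \<integral>\<^sup>+ \<beta>. etotN p c \<sigma> n (fst h, snd h @ [(ia, replace_at (last_st h) (fst ia) \<beta>)])
            \<partial>measure_pmf (p (last_st h ! fst ia) (snd ia)))
        \<partial>measure_pmf (\<sigma> h))"

definition ETotalN :: "('q \<Rightarrow> 'a \<Rightarrow> 'q list pmf) \<Rightarrow> ('q \<Rightarrow> 'a \<Rightarrow> real) \<Rightarrow> nat \<Rightarrow> 'q list \<Rightarrow> ('q,'a) strat \<Rightarrow> ennreal" where
  "ETotalN p c N \<alpha> \<sigma> = etotN p c \<sigma> N (\<alpha>, [])"

definition ETotal_strat :: "('q \<Rightarrow> 'a \<Rightarrow> 'q list pmf) \<Rightarrow> ('q \<Rightarrow> 'a \<Rightarrow> real) \<Rightarrow> 'q list \<Rightarrow> ('q,'a) strat \<Rightarrow> ennreal" where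
  "ETotal_strat p c \<alpha> \<sigma> = lim (\<lambda>N. ETotalN p c N \<alpha> \<sigma>)"

definition ETotal :: "('q \<Rightarrow> 'a set) \<Rightarrow> ('q \<Rightarrow> 'a \<Rightarrow> 'q list pmf) \<Rightarrow> ('q \<Rightarrow> 'a \<Rightarrow> real) \<Rightarrow> 'q list \<Rightarrow> ennreal" where
  "ETotal A p c \<alpha> = (INF \<sigma> \<in> {\<sigma>. strategy A \<sigma>}. ETotal_strat p c \<alpha> \<sigma>)"

end

theory Submission
  imports Defs
begin

lemma Min_img_mono:
  fixes F G :: "'e \<Rightarrow> 'b::linorder"
  assumes "finite E" "E \<noteq> {}" "\<And>e. e \<in> E \<Longrightarrow> F e \<le> G e"
  shows "Min (F ` E) \<le> Min (G ` E)"
proof -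
  have "Min (G ` E) \<in> G ` E" using assms by (intro Min_in) auto
  then obtain e where e: "e \<in> E" "Min (G ` E) = G e" by auto
  have "Min (F ` E) \<le> F e" using assms(1) e(1) by (intro Min_le) auto
  also have "\<dots> \<le> G e" using assms(3) e(1) by auto
  finally show ?thesis using e(2) by simp
qed

lemma Min_SUP_le:
  fixes g :: "nat \<Rightarrow> 'e \<Rightarrow> ennreal"
  assumes fin: "finite E" and ne: "E \<noteq> {}" and inc: "\<And>m e. e \<in> E \<Longrightarrow> g m e \<le> g (Suc m) e"
  shows "Min ((\<lambda>e. SUP m. g m e) ` E) \<le> (SUP m. Min ((\<lambda>e. g m e) ` E))"
proof (rule ccontr)
  define S where "S = (SUP m. Min ((\<lambda>e. g m e) ` E))"
  assume "\<not> Min ((\<lambda>e. SUP m. g m e) ` E) \<le> (SUP m. Min ((\<lambda>e. g m e) ` E))"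
  hence lt: "S < Min ((\<lambda>e. SUP m. g m e) ` E)" unfolding S_def by simp
  have "\<forall>e\<in>E. \<exists>m. S < g m e"
  proof
    fix e assume "e \<in> E"
    hence "S < (SUP m. g m e)" using lt fin ne by simp
    then show "\<exists>m. S < g m e" by (simp add: less_SUP_iff)
  qed
  then obtain mf where mf: "\<forall>e\<in>E. S < g (mf e) e" by metis
  define M where "M = Max (mf ` E)"
  have mono: "g m e \<le> g n e" if "e \<in> E" "m \<le> n" for e m n
    using lift_Suc_mono_le[of "\<lambda>m. g m e"] inc that by blast
  have "\<forall>e\<in>E. S < g M e"
  proof
    fix e assume e: "e \<in> E"
    have "mf e \<le> M" unfolding M_def using fin e by simp
    thus "S < g M e" using mf e mono[OF e] by (meson less_le_trans)
  qed
  hence "S < Min ((\<lambda>e. g M e) ` E)" using fin ne by simp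
  moreover have "Min ((\<lambda>e. g M e) ` E) \<le> S" unfolding S_def by (rule SUP_upper) simp
  ultimately show False by simp
qed

lemma sum_list_nth: "sum_list (map f xs) = (\<Sum>i<length xs. f (xs ! i))"
  by (simp add: sum_list_sum_nth atLeast0LessThan)

lemma sum_list_replace:
  assumes "i < length xs"
  shows "sum_list (map f xs) = sum_list (map f (take i xs)) + sum_list (map f (drop (Suc i) xs)) + f (xs ! i)"
    and "sum_list (map (f :: _ \<Rightarrow> 'b::comm_monoid_add) (replace_at xs i ys)) =
         sum_list (map f (take i xs)) + sum_list (map f (drop (Suc i) xs)) + sum_list (map f ys)"
proof -
  have "xs = take i xs @ xs ! i # drop (Suc i) xs" using assms by (simp add: id_take_nth_drop)
  hence "sum_list (map f xs) = sum_list (map f (take i xs @ xs ! i # drop (Suc i) xs))" by simp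
  thus "sum_list (map f xs) = sum_list (map f (take i xs)) + sum_list (map f (drop (Suc i) xs)) + f (xs ! i)"
    by (simp add: ac_simps)
  show "sum_list (map f (replace_at xs i ys)) =
         sum_list (map f (take i xs)) + sum_list (map f (drop (Suc i) xs)) + sum_list (map f ys)"
    by (simp add: replace_at_def ac_simps)
qed

lemma length_replace_at: "i < length xs \<Longrightarrow> length (replace_at xs i ys) = length xs - 1 + length ys"
  by (simp add: replace_at_def)

lemma int_const_pmf[simp]: "(\<integral>\<^sup>+ x. (k::ennreal) \<partial>measure_pmf M) = k"
  by (simp add: measure_pmf.emeasure_space_1)

lemma int_add_pmf: "(\<integral>\<^sup>+ x. (f x + g x :: ennreal) \<partial>measure_pmf M) =
   (\<integral>\<^sup>+ x. f x \<partial>measure_pmf M) + (\<integral>\<^sup>+ x. g x \<partial>measure_pmf M)"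
  by (rule nn_integral_add) auto

lemma int_cmult_pmf: "(\<integral>\<^sup>+ x. (k * f x :: ennreal) \<partial>measure_pmf M) = k * (\<integral>\<^sup>+ x. f x \<partial>measure_pmf M)"
  by (rule nn_integral_cmult) auto

lemma int_mono_pmf: "(\<And>x. f x \<le> g x) \<Longrightarrow> (\<integral>\<^sup>+ x. (f x :: ennreal) \<partial>measure_pmf M) \<le> (\<integral>\<^sup>+ x. g x \<partial>measure_pmf M)"
  by (rule nn_integral_mono) auto

locale bm =
  fixes A :: "'q::finite \<Rightarrow> 'a::finite set"
    and p :: "'q \<Rightarrow> 'a \<Rightarrow> 'q list pmf" and c :: "'q \<Rightarrow> 'a \<Rightarrow> real"
  assumes B: "bmdp A p c"
begin

lemma A_ne: "A q \<noteq> {}" using B unfolding bmdp_def by auto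
lemma A_fin: "finite (A q)" by simp
lemma c_pos: "a \<in> A q \<Longrightarrow> c q a > 0" using B unfolding bmdp_def by auto
lemma p_fin: "a \<in> A q \<Longrightarrow> finite (set_pmf (p q a))" using B unfolding bmdp_def by auto

lemma en_fin: "finite (enabled A \<alpha>)"
proof -
  have "enabled A \<alpha> \<subseteq> {..<length \<alpha>} \<times> UNIV" unfolding enabled_def by auto
  thus ?thesis by (rule finite_subset) auto
qed

lemma en_ne: "\<alpha> \<noteq> [] \<Longrightarrow> enabled A \<alpha> \<noteq> {}"
proof -
  assume "\<alpha> \<noteq> []"
  moreover obtain a where "a \<in> A (\<alpha> ! 0)" using A_ne by blast
  ultimately have "(0, a) \<in> enabled A \<alpha>" unfolding enabled_def by auto
  thus ?thesis by auto
qed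

definition cmin :: real where "cmin = Min ((\<lambda>(q,a). c q a) ` {(q,a). a \<in> A q})"

lemma cmin: "a \<in> A q \<Longrightarrow> cmin \<le> c q a" "cmin > 0"
proof -
  have fin: "finite ((\<lambda>(q,a). c q a) ` {(q,a). a \<in> A q})" by simp
  obtain q0 a0 where "a0 \<in> A q0" using A_ne by blast
  hence ne: "(\<lambda>(q,a). c q a) ` {(q,a). a \<in> A q} \<noteq> {}" by auto
  show "a \<in> A q \<Longrightarrow> cmin \<le> c q a" unfolding cmin_def using fin by (intro Min_le) auto
  show "cmin > 0" unfolding cmin_def using fin ne c_pos by (auto simp: Min_gr_iff)
qed

definition gT :: "('q list \<Rightarrow> ennreal) \<Rightarrow> 'q list \<Rightarrow> nat \<times> 'a \<Rightarrow> ennreal" where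
  "gT f \<alpha> e = ennreal (c (\<alpha> ! fst e) (snd e)) + \<integral>\<^sup>+ \<beta>. f (replace_at \<alpha> (fst e) \<beta>) \<partial>measure_pmf (p (\<alpha> ! fst e) (snd e))"

definition Tb :: "('q list \<Rightarrow> ennreal) \<Rightarrow> 'q list \<Rightarrow> ennreal" where
  "Tb f \<alpha> = (if \<alpha> = [] then 0 else Min (gT f \<alpha> ` enabled A \<alpha>))"

lemma Tb_le: "e \<in> enabled A \<alpha> \<Longrightarrow> Tb f \<alpha> \<le> gT f \<alpha> e"
  unfolding Tb_def using en_fin by (auto intro: Min_le)

lemma gT_mono: "(\<And>x. f x \<le> g x) \<Longrightarrow> gT f \<alpha> e \<le> gT g \<alpha> e"
  unfolding gT_def by (intro add_left_mono int_mono_pmf) auto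

lemma Tb_mono: "(\<And>x. f x \<le> g x) \<Longrightarrow> Tb f \<alpha> \<le> Tb g \<alpha>"
proof (cases "\<alpha> = []")
  case False
  assume "\<And>x. f x \<le> g x"
  hence "Min (gT f \<alpha> ` enabled A \<alpha>) \<le> Min (gT g \<alpha> ` enabled A \<alpha>)"
    using en_fin en_ne[OF False] by (intro Min_img_mono gT_mono) auto
  thus ?thesis using False unfolding Tb_def by simp
qed (simp add: Tb_def)

definition Vn :: "nat \<Rightarrow> 'q list \<Rightarrow> ennreal" where "Vn m = (Tb ^^ m) (\<lambda>_. 0)"
definition Vs :: "'q list \<Rightarrow> ennreal" where "Vs \<alpha> = (SUP m. Vn m \<alpha>)"

lemma Vn_Suc: "Vn (Suc m) \<alpha> = Tb (Vn m) \<alpha>" unfolding Vn_def by simp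

lemma Vn_inc: "Vn m \<alpha> \<le> Vn (Suc m) \<alpha>"
proof (induction m arbitrary: \<alpha>)
  case 0 show ?case by (simp add: Vn_def)
next
  case (Suc m) thus ?case unfolding Vn_Suc[of "Suc m"] Vn_Suc[of m] by (intro Tb_mono) auto
qed

lemma Vn_le_Vs: "Vn m \<alpha> \<le> Vs \<alpha>" unfolding Vs_def by (rule SUP_upper) simp

lemma Vs_nil: "Vs [] = 0"
proof -
  have "Vn m [] = 0" for m by (cases m) (auto simp: Vn_def Tb_def)
  thus ?thesis unfolding Vs_def by simp
qed

lemma Vs_le_Tb: "Vs \<alpha> \<le> Tb Vs \<alpha>"
  unfolding Vs_def
proof (rule SUP_least)
  fix m show "Vn m \<alpha> \<le> Tb (\<lambda>\<alpha>. SUP m. Vn m \<alpha>) \<alpha>"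
  proof (cases m)
    case 0 thus ?thesis by (simp add: Vn_def)
  next
    case (Suc k) show ?thesis unfolding Suc Vn_Suc by (intro Tb_mono SUP_upper) simp
  qed
qed

lemma Tb_le_Vs: "Tb Vs \<alpha> \<le> Vs \<alpha>"
proof (cases "\<alpha> = []")
  case True thus ?thesis by (simp add: Tb_def)
next
  case False
  have eq: "gT Vs \<alpha> e = (SUP m. gT (Vn m) \<alpha> e)" for e
  proof -
    have "(\<integral>\<^sup>+ \<beta>. Vs (replace_at \<alpha> (fst e) \<beta>) \<partial>measure_pmf (p (\<alpha> ! fst e) (snd e))) =
          (SUP m. \<integral>\<^sup>+ \<beta>. Vn m (replace_at \<alpha> (fst e) \<beta>) \<partial>measure_pmf (p (\<alpha> ! fst e) (snd e)))"
      unfolding Vs_def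
      by (rule nn_integral_monotone_convergence_SUP) (auto intro!: incseq_SucI simp: le_fun_def Vn_inc)
    thus ?thesis unfolding gT_def by (simp add: ennreal_SUP_add_right)
  qed
  have "Tb Vs \<alpha> = Min ((\<lambda>e. SUP m. gT (Vn m) \<alpha> e) ` enabled A \<alpha>)"
    using False unfolding Tb_def eq by simp
  also have "\<dots> \<le> (SUP m. Min ((\<lambda>e. gT (Vn m) \<alpha> e) ` enabled A \<alpha>))"
    using en_fin en_ne[OF False]
    by (intro Min_SUP_le) (auto simp: gT_def intro!: add_left_mono int_mono_pmf Vn_inc)
  also have "\<dots> = (SUP m. Vn (Suc m) \<alpha>)" using False by (simp add: Vn_Suc Tb_def)
  also have "\<dots> \<le> Vs \<alpha>" by (intro SUP_least Vn_le_Vs)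
  finally show ?thesis .
qed

lemma Tb_Vs: "Tb Vs \<alpha> = Vs \<alpha>" using Vs_le_Tb Tb_le_Vs by (metis antisym)

definition gS :: "('q \<Rightarrow> ennreal) \<Rightarrow> 'q \<Rightarrow> 'a \<Rightarrow> ennreal" where
  "gS f q a = ennreal (c q a) + \<integral>\<^sup>+ \<beta>. (\<Sum>i<length \<beta>. f (\<beta> ! i)) \<partial>measure_pmf (p q a)"

definition Sb :: "('q \<Rightarrow> ennreal) \<Rightarrow> 'q \<Rightarrow> ennreal" where
  "Sb f q = Min (gS f q ` A q)"

lemma Sb_le: "a \<in> A q \<Longrightarrow> Sb f q \<le> gS f q a"
  unfolding Sb_def by (intro Min_le) auto

lemma gS_mono: "(\<And>x. f x \<le> g x) \<Longrightarrow> gS f q a \<le> gS g q a"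
  unfolding gS_def by (intro add_left_mono int_mono_pmf sum_mono) auto

lemma Sb_mono: "(\<And>x. f x \<le> g x) \<Longrightarrow> Sb f q \<le> Sb g q"
  unfolding Sb_def using A_ne[of q] by (intro Min_img_mono gS_mono) auto

definition Uk :: "nat \<Rightarrow> 'q \<Rightarrow> ennreal" where "Uk n = (Sb ^^ n) (\<lambda>_. 0)"
definition U :: "'q \<Rightarrow> ennreal" where "U q = (SUP n. Uk n q)"

lemma Uk_Suc: "Uk (Suc n) q = Sb (Uk n) q" unfolding Uk_def by simp

lemma Uk_inc: "Uk n q \<le> Uk (Suc n) q"
proof (induction n arbitrary: q)
  case 0 show ?case by (simp add: Uk_def)
next
  case (Suc m) thus ?case unfolding Uk_Suc[of "Suc m"] Uk_Suc[of m] by (intro Sb_mono) auto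
qed

lemma Uk_le_U: "Uk n q \<le> U q" unfolding U_def by (rule SUP_upper) simp

lemma U_le_Sb: "U q \<le> Sb U q"
  unfolding U_def
proof (rule SUP_least)
  fix m show "Uk m q \<le> Sb (\<lambda>q. SUP m. Uk m q) q"
  proof (cases m)
    case 0 thus ?thesis by (simp add: Uk_def)
  next
    case (Suc k) show ?thesis unfolding Suc Uk_Suc by (intro Sb_mono SUP_upper) simp
  qed
qed

lemma Sb_le_U: "Sb U q \<le> U q"
proof -
  have eq: "gS U q a = (SUP m. gS (Uk m) q a)" for a
  proof -
    have "(\<lambda>\<beta>. \<Sum>i<length \<beta>. U (\<beta> ! i)) = (\<lambda>\<beta>. SUP m. \<Sum>i<length \<beta>. Uk m (\<beta> ! i))"
      unfolding U_def by (rule ext, rule ennreal_SUP_sum[symmetric]) (auto intro!: incseq_SucI Uk_inc)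
    moreover have "(\<integral>\<^sup>+ \<beta>. (SUP m. \<Sum>i<length \<beta>. Uk m (\<beta> ! i)) \<partial>measure_pmf (p q a)) =
          (SUP m. \<integral>\<^sup>+ \<beta>. (\<Sum>i<length \<beta>. Uk m (\<beta> ! i)) \<partial>measure_pmf (p q a))"
      by (rule nn_integral_monotone_convergence_SUP) (auto intro!: incseq_SucI sum_mono simp: le_fun_def Uk_inc)
    ultimately show ?thesis unfolding gS_def by (simp add: ennreal_SUP_add_right)
  qed
  have "Sb U q = Min ((\<lambda>a. SUP m. gS (Uk m) q a) ` A q)"
    unfolding Sb_def eq by simp
  also have "\<dots> \<le> (SUP m. Min ((\<lambda>a. gS (Uk m) q a) ` A q))"
    using A_ne[of q]
    by (intro Min_SUP_le) (auto intro!: gS_mono Uk_inc)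
  also have "\<dots> = (SUP m. Uk (Suc m) q)" by (simp add: Uk_Suc Sb_def)
  also have "\<dots> \<le> U q" by (intro SUP_least Uk_le_U)
  finally show ?thesis .
qed

lemma Sb_U: "Sb U q = U q" using U_le_Sb Sb_le_U by (metis antisym)

lemma Uk_fin: "Uk n q < top"
proof (induction n arbitrary: q)
  case 0 show ?case by (simp add: Uk_def)
next
  case (Suc n)
  obtain a where a: "a \<in> A q" using A_ne by blast
  have "(\<integral>\<^sup>+ \<beta>. (\<Sum>i<length \<beta>. Uk n (\<beta> ! i)) \<partial>measure_pmf (p q a)) =
        (\<Sum>x\<in>set_pmf (p q a). (\<Sum>i<length x. Uk n (x ! i)) * ennreal (pmf (p q a) x))"
    using p_fin[OF a] by (rule nn_integral_measure_pmf_finite) simp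
  also have "\<dots> < top" using p_fin[OF a] Suc.IH by (simp add: ennreal_mult_less_top)
  finally have "gS (Uk n) q a < top" unfolding gS_def by simp
  thus ?case unfolding Uk_Suc using Sb_le[OF a, of "Uk n"] by (meson le_less_trans)
qed

definition mu :: "'q list \<Rightarrow> nat \<times> 'a" where
  "mu \<alpha> = (SOME e. e \<in> enabled A \<alpha> \<and> Vs \<alpha> = gT Vs \<alpha> e)"

lemma mu: assumes "\<alpha> \<noteq> []" shows "mu \<alpha> \<in> enabled A \<alpha>" "Vs \<alpha> = gT Vs \<alpha> (mu \<alpha>)"
proof -
  have "Tb Vs \<alpha> \<in> gT Vs \<alpha> ` enabled A \<alpha>"
    unfolding Tb_def using assms en_fin en_ne[OF assms] by (simp add: Min_in)
  then obtain e where "e \<in> enabled A \<alpha> \<and> Vs \<alpha> = gT Vs \<alpha> e" using Tb_Vs[of \<alpha>] by auto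
  hence "mu \<alpha> \<in> enabled A \<alpha> \<and> Vs \<alpha> = gT Vs \<alpha> (mu \<alpha>)" unfolding mu_def by (rule someI)
  thus "mu \<alpha> \<in> enabled A \<alpha>" "Vs \<alpha> = gT Vs \<alpha> (mu \<alpha>)" by auto
qed

definition Gm :: "('q list \<Rightarrow> ennreal) \<Rightarrow> 'q list \<Rightarrow> ennreal" where
  "Gm f \<alpha> = (if \<alpha> = [] then 0 else gT f \<alpha> (mu \<alpha>))"

definition Pm :: "('q list \<Rightarrow> ennreal) \<Rightarrow> 'q list \<Rightarrow> ennreal" where
  "Pm f \<alpha> = (if \<alpha> = [] then 0 else
     \<integral>\<^sup>+ \<beta>. f (replace_at \<alpha> (fst (mu \<alpha>)) \<beta>) \<partial>measure_pmf (p (\<alpha> ! fst (mu \<alpha>)) (snd (mu \<alpha>))))"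

lemma claimB: "Vs \<alpha> = (Gm ^^ k) (\<lambda>_. 0) \<alpha> + (Pm ^^ k) Vs \<alpha>"
proof (induction k arbitrary: \<alpha>)
  case 0 show ?case by simp
next
  case (Suc k)
  show ?case
  proof (cases "\<alpha> = []")
    case True thus ?thesis by (simp add: Gm_def Pm_def Vs_nil)
  next
    case False
    have e: "(\<lambda>\<beta>. Vs (replace_at \<alpha> (fst (mu \<alpha>)) \<beta>)) =
      (\<lambda>\<beta>. (Gm ^^ k) (\<lambda>_. 0) (replace_at \<alpha> (fst (mu \<alpha>)) \<beta>) + (Pm ^^ k) Vs (replace_at \<alpha> (fst (mu \<alpha>)) \<beta>))"
      by (rule ext) (rule Suc.IH)
    have "Vs \<alpha> = gT Vs \<alpha> (mu \<alpha>)" using mu[OF False] by simp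
    also have "\<dots> = Gm ((Gm ^^ k) (\<lambda>_. 0)) \<alpha> + Pm ((Pm ^^ k) Vs) \<alpha>"
      using False unfolding gT_def Gm_def Pm_def e int_add_pmf by (simp add: ac_simps)
    finally show ?thesis by simp
  qed
qed

lemma claimA: assumes "\<And>x. \<phi> x \<le> Gm \<phi> x"
  shows "\<phi> \<alpha> \<le> (Gm ^^ k) (\<lambda>_. 0) \<alpha> + (Pm ^^ k) \<phi> \<alpha>"
proof (induction k arbitrary: \<alpha>)
  case 0 show ?case by simp
next
  case (Suc k)
  show ?case
  proof (cases "\<alpha> = []")
    case True thus ?thesis using assms[of \<alpha>] by (simp add: Gm_def Pm_def)
  next
    case False
    have "\<phi> \<alpha> \<le> Gm \<phi> \<alpha>" by (rule assms)
    also have "\<dots> = ennreal (c (\<alpha> ! fst (mu \<alpha>)) (snd (mu \<alpha>))) + 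
       \<integral>\<^sup>+ \<beta>. \<phi> (replace_at \<alpha> (fst (mu \<alpha>)) \<beta>) \<partial>measure_pmf (p (\<alpha> ! fst (mu \<alpha>)) (snd (mu \<alpha>)))"
      using False by (simp add: Gm_def gT_def)
    also have "\<dots> \<le> ennreal (c (\<alpha> ! fst (mu \<alpha>)) (snd (mu \<alpha>))) + 
       \<integral>\<^sup>+ \<beta>. ((Gm ^^ k) (\<lambda>_. 0) (replace_at \<alpha> (fst (mu \<alpha>)) \<beta>) + (Pm ^^ k) \<phi> (replace_at \<alpha> (fst (mu \<alpha>)) \<beta>))
          \<partial>measure_pmf (p (\<alpha> ! fst (mu \<alpha>)) (snd (mu \<alpha>)))"
      by (intro add_left_mono int_mono_pmf Suc.IH)
    also have "\<dots> = Gm ((Gm ^^ k) (\<lambda>_. 0)) \<alpha> + Pm ((Pm ^^ k) \<phi>) \<alpha>"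
      using False unfolding gT_def Gm_def Pm_def int_add_pmf by (simp add: ac_simps)
    finally show ?thesis by simp
  qed
qed

lemma claimC: assumes "\<And>x. \<phi> x \<le> K * \<psi> x"
  shows "(Pm ^^ k) \<phi> \<alpha> \<le> K * (Pm ^^ k) \<psi> \<alpha>"
proof (induction k arbitrary: \<alpha>)
  case 0 show ?case using assms by simp
next
  case (Suc k)
  show ?case
  proof (cases "\<alpha> = []")
    case True thus ?thesis by (simp add: Pm_def)
  next
    case False
    have "(Pm ^^ Suc k) \<phi> \<alpha> = \<integral>\<^sup>+ \<beta>. (Pm ^^ k) \<phi> (replace_at \<alpha> (fst (mu \<alpha>)) \<beta>) \<partial>measure_pmf (p (\<alpha> ! fst (mu \<alpha>)) (snd (mu \<alpha>)))"
      using False by (simp add: Pm_def)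
    also have "\<dots> \<le> \<integral>\<^sup>+ \<beta>. K * (Pm ^^ k) \<psi> (replace_at \<alpha> (fst (mu \<alpha>)) \<beta>) \<partial>measure_pmf (p (\<alpha> ! fst (mu \<alpha>)) (snd (mu \<alpha>)))"
      by (intro int_mono_pmf Suc.IH)
    also have "\<dots> = K * (Pm ^^ Suc k) \<psi> \<alpha>"
      using False by (simp add: Pm_def int_cmult_pmf)
    finally show ?thesis .
  qed
qed

lemma Tb_le_Gm: "Tb f \<alpha> \<le> Gm f \<alpha>"
proof (cases "\<alpha> = []")
  case False thus ?thesis using Tb_le[OF mu(1)[OF False], of f] by (simp add: Gm_def)
qed (simp add: Tb_def Gm_def)

lemma claimD: "Vn k \<alpha> \<le> (Gm ^^ k) (\<lambda>_. 0) \<alpha>"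
proof (induction k arbitrary: \<alpha>)
  case 0 show ?case by (simp add: Vn_def)
next
  case (Suc k)
  have "Vn (Suc k) \<alpha> = Tb (Vn k) \<alpha>" by (rule Vn_Suc)
  also have "\<dots> \<le> Tb ((Gm ^^ k) (\<lambda>_. 0)) \<alpha>" by (intro Tb_mono Suc.IH)
  also have "\<dots> \<le> Gm ((Gm ^^ k) (\<lambda>_. 0)) \<alpha>" by (rule Tb_le_Gm)
  finally show ?case by simp
qed

lemma Vn_len: "ennreal cmin * of_nat (min m (length \<alpha>)) \<le> Vn m \<alpha>"
proof (induction m arbitrary: \<alpha>)
  case 0 show ?case by simp
next
  case (Suc m)
  show ?case
  proof (cases "\<alpha> = []")
    case True thus ?thesis by simp
  next
    case False
    have "ennreal cmin * of_nat (min (Suc m) (length \<alpha>)) \<le> gT (Vn m) \<alpha> e" if e: "e \<in> enabled A \<alpha>" for e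
    proof -
      have i: "fst e < length \<alpha>" "snd e \<in> A (\<alpha> ! fst e)" using e unfolding enabled_def by auto
      have "ennreal cmin * of_nat (min m (length \<alpha> - 1)) \<le>
            \<integral>\<^sup>+ \<beta>. Vn m (replace_at \<alpha> (fst e) \<beta>) \<partial>measure_pmf (p (\<alpha> ! fst e) (snd e))"
      proof -
        have "ennreal cmin * of_nat (min m (length \<alpha> - 1)) \<le> Vn m (replace_at \<alpha> (fst e) \<beta>)" for \<beta>
        proof -
          have "ennreal cmin * of_nat (min m (length \<alpha> - 1)) \<le> ennreal cmin * of_nat (min m (length (replace_at \<alpha> (fst e) \<beta>)))"
            using length_replace_at[OF i(1)] by (intro mult_left_mono) auto
          also have "\<dots> \<le> Vn m (replace_at \<alpha> (fst e) \<beta>)" by (rule Suc.IH)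
          finally show ?thesis .
        qed
        hence "(\<integral>\<^sup>+ \<beta>. ennreal cmin * of_nat (min m (length \<alpha> - 1)) \<partial>measure_pmf (p (\<alpha> ! fst e) (snd e))) \<le>
            \<integral>\<^sup>+ \<beta>. Vn m (replace_at \<alpha> (fst e) \<beta>) \<partial>measure_pmf (p (\<alpha> ! fst e) (snd e))"
          by (intro int_mono_pmf)
        thus ?thesis by simp
      qed
      moreover have "ennreal cmin \<le> ennreal (c (\<alpha> ! fst e) (snd e))" using cmin(1)[OF i(2)] by (rule ennreal_leI)
      ultimately have "ennreal cmin + ennreal cmin * of_nat (min m (length \<alpha> - 1)) \<le> gT (Vn m) \<alpha> e"
        unfolding gT_def by (intro add_mono)
      moreover have "min (Suc m) (length \<alpha>) = Suc (min m (length \<alpha> - 1))" using False by (cases \<alpha>) auto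
      ultimately show ?thesis by (simp add: distrib_left)
    qed
    thus ?thesis using False en_fin en_ne[OF False] by (simp add: Vn_Suc Tb_def)
  qed
qed

lemma Vs_len: "ennreal cmin * of_nat (length \<alpha>) \<le> Vs \<alpha>"
  using Vn_len[of "length \<alpha>" \<alpha>] Vn_le_Vs[of "length \<alpha>" \<alpha>] by simp



lemma phi_le_Gm: "sum_list (map (Uk n) x) \<le> Gm (\<lambda>y. sum_list (map (Uk n) y)) x"
proof (cases "x = []")
  case True thus ?thesis by simp
next
  case False
  define i where "i = fst (mu x)"
  define a where "a = snd (mu x)"
  have ia: "i < length x" "a \<in> A (x ! i)" using mu(1)[OF False] unfolding i_def a_def enabled_def by auto
  define R where "R = sum_list (map (Uk n) (take i x)) + sum_list (map (Uk n) (drop (Suc i) x))"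
  have "sum_list (map (Uk n) x) = R + Uk n (x ! i)" unfolding R_def by (rule sum_list_replace(1)[OF ia(1)])
  also have "Uk n (x ! i) \<le> gS (Uk n) (x ! i) a"
    using Uk_inc[of n "x ! i"] Sb_le[OF ia(2), of "Uk n"] unfolding Uk_Suc by (meson order_trans)
  hence "R + Uk n (x ! i) \<le> R + gS (Uk n) (x ! i) a" by (rule add_left_mono)
  also have "\<dots> = Gm (\<lambda>y. sum_list (map (Uk n) y)) x"
  proof -
    have m: "mu x = (i, a)" unfolding i_def a_def by simp
    have r: "(\<lambda>\<beta>. sum_list (map (Uk n) (replace_at x i \<beta>))) = (\<lambda>\<beta>. R + sum_list (map (Uk n) \<beta>))"
      unfolding R_def by (rule ext) (rule sum_list_replace(2)[OF ia(1)])
    have g: "gS (Uk n) (x ! i) a = ennreal (c (x ! i) a) + \<integral>\<^sup>+ \<beta>. sum_list (map (Uk n) \<beta>) \<partial>measure_pmf (p (x ! i) a)"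
      unfolding gS_def sum_list_nth ..
    have "Gm (\<lambda>y. sum_list (map (Uk n) y)) x = ennreal (c (x ! i) a) + \<integral>\<^sup>+ \<beta>. sum_list (map (Uk n) (replace_at x i \<beta>)) \<partial>measure_pmf (p (x ! i) a)"
      using False unfolding Gm_def gT_def m by simp
    also have "\<dots> = ennreal (c (x ! i) a) + (R + \<integral>\<^sup>+ \<beta>. sum_list (map (Uk n) \<beta>) \<partial>measure_pmf (p (x ! i) a))"
      unfolding r int_add_pmf int_const_pmf ..
    finally show ?thesis unfolding g by (simp only: ac_simps)
  qed
  finally show ?thesis .
qed

lemma sum_Uk_le_Vs: "(\<Sum>i<length \<alpha>. Uk n (\<alpha> ! i)) \<le> Vs \<alpha>"
proof -
  define \<phi> where "\<phi> = (\<lambda>y. sum_list (map (Uk n) y))"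
  have phiG: "\<phi> x \<le> Gm \<phi> x" for x unfolding \<phi>_def by (rule phi_le_Gm)
  have "\<phi> \<alpha> \<le> Vs \<alpha>"
  proof (cases "Vs \<alpha> = top")
    case True thus ?thesis by simp
  next
    case fin: False
    define B where "B = Max (range (\<lambda>q. enn2real (Uk n q)))"
    have EB: "enn2real (Uk n q) \<le> B" for q unfolding B_def by (rule Max_ge) auto
    have UB: "Uk n q \<le> ennreal B" for q
    proof -
      have "Uk n q = ennreal (enn2real (Uk n q))" using Uk_fin[of n q] by simp
      also have "\<dots> \<le> ennreal B" using EB[of q] by (rule ennreal_leI)
      finally show ?thesis .
    qed
    have B0: "B \<ge> 0" using EB[of undefined] enn2real_nonneg[of "Uk n undefined"] by linarith
    have cm: "cmin > 0" by (rule cmin(2))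
    define \<kappa> where "\<kappa> = B / cmin"
    have k0: "\<kappa> \<ge> 0" unfolding \<kappa>_def using B0 cm by simp
    have kc: "ennreal \<kappa> * ennreal cmin = ennreal B"
      unfolding \<kappa>_def using cm k0 by (simp add: ennreal_mult[symmetric] \<kappa>_def)
    have phiK: "\<phi> x \<le> ennreal \<kappa> * Vs x" for x
    proof -
      have "\<phi> x = (\<Sum>i<length x. Uk n (x ! i))" unfolding \<phi>_def by (rule sum_list_nth)
      also have "\<dots> \<le> of_nat (card {..<length x}) * ennreal B" by (rule sum_bounded_above) (rule UB)
      also have "\<dots> = (ennreal \<kappa> * ennreal cmin) * of_nat (length x)" unfolding kc by (simp add: mult.commute)
      also have "\<dots> = ennreal \<kappa> * (ennreal cmin * of_nat (length x))" by (rule mult.assoc)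
      also have "\<dots> \<le> ennreal \<kappa> * Vs x" by (intro mult_left_mono Vs_len) simp
      finally show ?thesis .
    qed
    show ?thesis
    proof (rule ennreal_le_epsilon)
      fix e :: real assume e: "0 < e"
      define d where "d = e / (\<kappa> + 1)"
      have d0: "d > 0" unfolding d_def using e k0 by simp
      have kd: "\<kappa> * d \<le> e"
      proof -
        have "\<kappa> * d = e * (\<kappa> / (\<kappa> + 1))" unfolding d_def by simp
        also have "\<dots> \<le> e * 1" using e k0 by (intro mult_left_mono) auto
        finally show ?thesis by simp
      qed
      have "Vs \<alpha> + 0 < Vs \<alpha> + ennreal d" using fin d0
        by (subst ennreal_add_left_cancel_less) (simp add: top_ennreal.rep_eq infinity_ennreal_def)
      hence "Vs \<alpha> < Vs \<alpha> + ennreal d" by simp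
      also have "\<dots> = (SUP k. Vn k \<alpha> + ennreal d)" unfolding Vs_def by (rule ennreal_SUP_add_left[symmetric]) simp
      finally obtain k where k: "Vs \<alpha> < Vn k \<alpha> + ennreal d" by (auto simp: less_SUP_iff)
      define J where "J = (Gm ^^ k) (\<lambda>_. 0) \<alpha>"
      define z where "z = (Pm ^^ k) Vs \<alpha>"
      have Jz: "Vs \<alpha> = J + z" unfolding J_def z_def by (rule claimB)
      have JV: "J \<le> Vs \<alpha>" unfolding Jz by simp
      have Jfin: "J \<noteq> \<infinity>" using JV fin by (auto simp: top_unique infinity_ennreal_def)
      have "J + z < Vn k \<alpha> + ennreal d" using k unfolding Jz .
      also have "\<dots> \<le> J + ennreal d" unfolding J_def by (intro add_right_mono claimD)
      finally have "J + z < J + ennreal d" .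
      hence zd: "z \<le> ennreal d" using Jfin ennreal_add_left_cancel_less by auto
      have A1: "\<phi> \<alpha> \<le> J + (Pm ^^ k) \<phi> \<alpha>" unfolding J_def by (rule claimA[OF phiG])
      have A2: "(Pm ^^ k) \<phi> \<alpha> \<le> ennreal \<kappa> * z" unfolding z_def by (rule claimC[OF phiK])
      have A3: "ennreal \<kappa> * z \<le> ennreal \<kappa> * ennreal d" using zd by (rule mult_left_mono) simp
      have A4: "ennreal \<kappa> * ennreal d \<le> ennreal e" 
        using kd k0 d0 by (simp add: ennreal_mult[symmetric] ennreal_leI)
      have "\<phi> \<alpha> \<le> J + ennreal e" using A1 A2 A3 A4 by (meson add_left_mono order_trans)
      also have "\<dots> \<le> Vs \<alpha> + ennreal e" using JV by (rule add_right_mono)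
      finally show "\<phi> \<alpha> \<le> Vs \<alpha> + ennreal e" .
    qed
  qed
  thus ?thesis unfolding \<phi>_def sum_list_nth .
qed

lemma W_le_Vs: "sum_list (map U \<alpha>) \<le> Vs \<alpha>"
proof -
  have "sum_list (map U \<alpha>) = (\<Sum>i<length \<alpha>. SUP n. Uk n (\<alpha> ! i))" unfolding sum_list_nth U_def ..
  also have "\<dots> = (SUP n. \<Sum>i<length \<alpha>. Uk n (\<alpha> ! i))"
    by (rule ennreal_SUP_sum[symmetric]) (auto intro!: incseq_SucI Uk_inc)
  also have "\<dots> \<le> Vs \<alpha>" by (intro SUP_least sum_Uk_le_Vs)
  finally show ?thesis .
qed

lemma Tb_W: "Tb (\<lambda>x. sum_list (map U x)) \<alpha> \<le> sum_list (map U \<alpha>)"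
proof (cases "\<alpha> = []")
  case True thus ?thesis by (simp add: Tb_def)
next
  case False
  have "Sb U (\<alpha> ! 0) \<in> gS U (\<alpha> ! 0) ` A (\<alpha> ! 0)" unfolding Sb_def using A_ne by (intro Min_in) auto
  then obtain a where a: "a \<in> A (\<alpha> ! 0)" "Sb U (\<alpha> ! 0) = gS U (\<alpha> ! 0) a" by auto
  have i: "0 < length \<alpha>" using False by simp
  have e: "(0, a) \<in> enabled A \<alpha>" using a i unfolding enabled_def by auto
  define R where "R = sum_list (map U (take 0 \<alpha>)) + sum_list (map U (drop (Suc 0) \<alpha>))"
  have "Tb (\<lambda>x. sum_list (map U x)) \<alpha> \<le> gT (\<lambda>x. sum_list (map U x)) \<alpha> (0, a)" by (rule Tb_le[OF e])
  also have "\<dots> = R + gS U (\<alpha> ! 0) a"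
  proof -
    have r: "(\<lambda>\<beta>. sum_list (map U (replace_at \<alpha> 0 \<beta>))) = (\<lambda>\<beta>. R + sum_list (map U \<beta>))"
      unfolding R_def by (rule ext) (rule sum_list_replace(2)[OF i])
    have "gT (\<lambda>x. sum_list (map U x)) \<alpha> (0, a) = ennreal (c (\<alpha> ! 0) a) +
       \<integral>\<^sup>+ \<beta>. sum_list (map U (replace_at \<alpha> 0 \<beta>)) \<partial>measure_pmf (p (\<alpha> ! 0) a)"
      by (simp add: gT_def)
    also have "\<dots> = ennreal (c (\<alpha> ! 0) a) + (R + \<integral>\<^sup>+ \<beta>. sum_list (map U \<beta>) \<partial>measure_pmf (p (\<alpha> ! 0) a))"
      unfolding r int_add_pmf int_const_pmf ..
    finally show ?thesis unfolding gS_def sum_list_nth by (simp only: ac_simps)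
  qed
  also have "\<dots> = R + U (\<alpha> ! 0)" using a(2) Sb_U by simp
  also have "\<dots> = sum_list (map U \<alpha>)" unfolding R_def using sum_list_replace(1)[OF i, of U] by simp
  finally show ?thesis .
qed

lemma Vs_eq: "Vs \<alpha> = sum_list (map U \<alpha>)"
proof (rule antisym)
  have "Vn m x \<le> sum_list (map U x)" for m x
  proof (induction m arbitrary: x)
    case 0 show ?case by (simp add: Vn_def)
  next
    case (Suc m)
    have "Vn (Suc m) x \<le> Tb (\<lambda>x. sum_list (map U x)) x" unfolding Vn_Suc by (intro Tb_mono Suc.IH)
    also have "\<dots> \<le> sum_list (map U x)" by (rule Tb_W)
    finally show ?case .
  qed
  thus "Vs \<alpha> \<le> sum_list (map U \<alpha>)" unfolding Vs_def by (intro SUP_least)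
qed (rule W_le_Vs)

lemma etot_mono: "etotN p c \<sigma> n h \<le> etotN p c \<sigma> (Suc n) h"
proof (induction n arbitrary: h)
  case 0 show ?case by simp
next
  case (Suc n) thus ?case by (auto intro!: int_mono_pmf add_left_mono)
qed

lemma ETotal_strat_SUP: "ETotal_strat p c \<alpha> \<sigma> = (SUP N. etotN p c \<sigma> N (\<alpha>, []))"
  unfolding ETotal_strat_def ETotalN_def
  by (rule limI, rule LIMSEQ_SUP, rule incseq_SucI, rule etot_mono)

lemma last_st_simps[simp]: "last_st (\<alpha>, []) = \<alpha>" "last_st (x, ys @ [y]) = snd y"
  by (auto simp: last_st_def)

lemma etot_lower: assumes "strategy A \<sigma>" shows "Vn n (last_st h) \<le> etotN p c \<sigma> n h"
proof (induction n arbitrary: h)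
  case 0 show ?case by (simp add: Vn_def)
next
  case (Suc n)
  show ?case
  proof (cases "last_st h = []")
    case True thus ?thesis by (simp add: Vn_Suc Tb_def)
  next
    case False
    define L where "L = last_st h"
    have "Vn (Suc n) L = \<integral>\<^sup>+ ia. Tb (Vn n) L \<partial>measure_pmf (\<sigma> h)" by (simp add: Vn_Suc)
    also have "\<dots> \<le> \<integral>\<^sup>+ ia. (ennreal (c (L ! fst ia) (snd ia)) +
          \<integral>\<^sup>+ \<beta>. etotN p c \<sigma> n (fst h, snd h @ [(ia, replace_at L (fst ia) \<beta>)])
            \<partial>measure_pmf (p (L ! fst ia) (snd ia))) \<partial>measure_pmf (\<sigma> h)"
    proof (rule nn_integral_mono_AE, rule AE_pmfI)
      fix ia assume "ia \<in> set_pmf (\<sigma> h)"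
      moreover have "set_pmf (\<sigma> h) \<subseteq> enabled A (last_st h)" using assms False unfolding strategy_def by blast
      ultimately have ia: "ia \<in> enabled A L" unfolding L_def by blast
      have "Tb (Vn n) L \<le> gT (Vn n) L ia" by (rule Tb_le[OF ia])
      also have "\<dots> \<le> ennreal (c (L ! fst ia) (snd ia)) +
          \<integral>\<^sup>+ \<beta>. etotN p c \<sigma> n (fst h, snd h @ [(ia, replace_at L (fst ia) \<beta>)])
            \<partial>measure_pmf (p (L ! fst ia) (snd ia))"
        unfolding gT_def using Suc.IH[of "(fst h, snd h @ [(ia, replace_at L (fst ia) _)])"]
        by (intro add_left_mono int_mono_pmf) simp
      finally show "Tb (Vn n) L \<le> \<dots>" .
    qed
    also have "\<dots> = etotN p c \<sigma> (Suc n) h" using False unfolding L_def by simp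
    finally show ?thesis unfolding L_def .
  qed
qed

definition sig0 :: "('q,'a) strat" where "sig0 h = return_pmf (mu (last_st h))"

lemma sig0_strategy: "strategy A sig0"
  unfolding strategy_def sig0_def using mu(1) by auto

lemma etot_upper: "etotN p c sig0 n h \<le> Vs (last_st h)"
proof (induction n arbitrary: h)
  case 0 show ?case by simp
next
  case (Suc n)
  show ?case
  proof (cases "last_st h = []")
    case True thus ?thesis by simp
  next
    case False
    define L where "L = last_st h"
    have "etotN p c sig0 (Suc n) h = ennreal (c (L ! fst (mu L)) (snd (mu L))) +
          \<integral>\<^sup>+ \<beta>. etotN p c sig0 n (fst h, snd h @ [(mu L, replace_at L (fst (mu L)) \<beta>)])
            \<partial>measure_pmf (p (L ! fst (mu L)) (snd (mu L)))"
      using False unfolding L_def by (simp add: sig0_def)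
    also have "\<dots> \<le> gT Vs L (mu L)"
      unfolding gT_def using Suc.IH[of "(fst h, snd h @ [(mu L, replace_at L (fst (mu L)) _)])"]
      by (intro add_left_mono int_mono_pmf) simp
    also have "\<dots> = Vs L" using mu(2)[of L] False unfolding L_def by simp
    finally show ?thesis unfolding L_def .
  qed
qed

lemma ETotal_Vs: "ETotal A p c \<alpha> = Vs \<alpha>"
proof (rule antisym)
  have "ETotal A p c \<alpha> \<le> ETotal_strat p c \<alpha> sig0"
    unfolding ETotal_def using sig0_strategy by (intro INF_lower) auto
  also have "\<dots> \<le> Vs \<alpha>" unfolding ETotal_strat_SUP using etot_upper[of _ "(\<alpha>, [])"]
    by (intro SUP_least) simp
  finally show "ETotal A p c \<alpha> \<le> Vs \<alpha>" .
next
  show "Vs \<alpha> \<le> ETotal A p c \<alpha>"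
    unfolding ETotal_def
  proof (rule INF_greatest)
    fix \<sigma> assume "\<sigma> \<in> {\<sigma>. strategy A \<sigma>}"
    hence s: "strategy A \<sigma>" by simp
    show "Vs \<alpha> \<le> ETotal_strat p c \<alpha> \<sigma>" unfolding ETotal_strat_SUP Vs_def
      using etot_lower[OF s, of _ "(\<alpha>, [])"] by (intro SUP_mono) auto
  qed
qed

lemma main:
  shows "(\<forall>\<alpha>. ETotal A p c \<alpha> = (\<Sum>i<length \<alpha>. ETotal A p c [\<alpha> ! i])) \<and>
         (\<forall>q. ETotal A p c [q] =
           Min ((\<lambda>a. ennreal (c q a) +
                   \<integral>\<^sup>+ \<beta>. (\<Sum>i<length \<beta>. ETotal A p c [\<beta> ! i]) \<partial>measure_pmf (p q a)) ` A q))"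
proof -
  have Ue: "(\<lambda>q. ETotal A p c [q]) = U" by (rule ext) (simp add: ETotal_Vs Vs_eq)
  have "ETotal A p c \<alpha> = (\<Sum>i<length \<alpha>. ETotal A p c [\<alpha> ! i])" for \<alpha>
    using Ue by (simp add: ETotal_Vs Vs_eq sum_list_nth fun_eq_iff)
  moreover have "ETotal A p c [q] =
           Min ((\<lambda>a. ennreal (c q a) +
                   \<integral>\<^sup>+ \<beta>. (\<Sum>i<length \<beta>. ETotal A p c [\<beta> ! i]) \<partial>measure_pmf (p q a)) ` A q)" for q
  proof -
    have "ETotal A p c [q] = Sb (\<lambda>q. ETotal A p c [q]) q" unfolding Ue using Ue Sb_U by (simp add: fun_eq_iff)
    thus ?thesis unfolding Sb_def gS_def .
  qed
  ultimately show ?thesis by blast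
qed

end

theorem mainTheorem2:
  fixes A :: "'q::finite \<Rightarrow> 'a::finite set"
    and p :: "'q \<Rightarrow> 'a \<Rightarrow> 'q list pmf" and c :: "'q \<Rightarrow> 'a \<Rightarrow> real"
  assumes "bmdp A p c"
  shows "(\<forall>\<alpha>. ETotal A p c \<alpha> = (\<Sum>i<length \<alpha>. ETotal A p c [\<alpha> ! i])) \<and>
         (\<forall>q. ETotal A p c [q] =
           Min ((\<lambda>a. ennreal (c q a) +
                   \<integral>\<^sup>+ \<beta>. (\<Sum>i<length \<beta>. ETotal A p c [\<beta> ! i]) \<partial>measure_pmf (p q a)) ` A q))"
proof -
  interpret bm A p c using assms by unfold_locales
  show ?thesis by (rule main)
qed

end
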